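(* Let $S$ be a finitely generated completely simple semigroup with maximal subgroups isomorphic to a group $G$. Let $\tau : Y^+ \to S$ be a finite semigroup choice of generators for $S$ and $\sigma : X^* \to G$ a finite monoid choice of generators for $G$, and let $W = \{u \in X^* : u\sigma = 1\}$ be the word problem of $G$. Then there is a rational transduction $\rho \subseteq X^* \times \hat{Y}^*$ such that $L_\tau(S)$ is the Kleene closure $(W\rho)^*$.
   Context: Maps are written on the right. $X^*$, $X^+$: free monoid and free semigroup on $X$. A semigroup is completely simple if it has no proper ideals and has a primitive idempotent (idempotent $e$ such that every idempotent $f$ with $ef = fe = f$ equals $e$); maximal subgroups are subsemigroups that are groups under the inherited multiplication and contained in no larger such. For a monoid $M$ and surjective morphism $\sigma : Y^* \to M$, let $\overline{Y} = \{\overline{y} : y \in Y\}$ be new symbols, $\hat{Y} = Y \cup \overline{Y}$; the loop automaton has vertex set $M$, for each $a \in M$, $y \in Y$ an edge $a \to a(y\sigma)$ labelled $y$ and an edge $a(y\sigma) \to a$ labelled $\overline{y}$; the loop problem is the set of labels of paths from the identity to the identity. For a semigroup $S$ and surjective $\tau : Y^+ \to S$, $L_\tau(S)$ is the loop problem of $S^1$ ($S$ with a new identity adjoined even if one exists) with respect to the extension $\tau^1 : Y^* \to S^1$. A finite transducer from $X$ to $Z$ is a finite directed graph with edges labelled by elements of $X^* \times Z^*$, an initial vertex and terminal vertices; the relation it accepts is the set of labels (componentwise concatenations) of paths from initial to terminal vertices; such relations are rational transductions. For $\rho \subseteq X^* \times Z^*$ and $L \subseteq X^*$, $L\rho = \{v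 : (u,v) \in \rho \text{ for some } u \in L\}$. The Kleene closure $K^*$ of a language $K$ is the submonoid of the free monoid generated by $K$. *)

theory Defs
  imports "HOL-Algebra.Group"
begin

section \<open>Semigroups (as HOL-Algebra structures whose one-field is ignored)\<close>

definition is_semigroup :: "('s, 'e) monoid_scheme \<Rightarrow> bool" where
  "is_semigroup S \<longleftrightarrow>
     (\<forall>x\<in>carrier S. \<forall>y\<in>carrier S. x \<otimes>\<^bsub>S\<^esub> y \<in> carrier S) \<and>
     (\<forall>x\<in>carrier S. \<forall>y\<in>carrier S. \<forall>z\<in>carrier S.
        (x \<otimes>\<^bsub>S\<^esub> y) \<otimes>\<^bsub>S\<^esub> z = x \<otimes>\<^bsub>S\<^esub> (y \<otimes>\<^bsub>S\<^esub> z))"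

definition sg_ideal :: "('s, 'e) monoid_scheme \<Rightarrow> 's set \<Rightarrow> bool" where
  "sg_ideal S I \<longleftrightarrow> I \<noteq> {} \<and> I \<subseteq> carrier S \<and>
     (\<forall>s\<in>carrier S. \<forall>i\<in>I. s \<otimes>\<^bsub>S\<^esub> i \<in> I \<and> i \<otimes>\<^bsub>S\<^esub> s \<in> I)"

definition primitive_idempotent :: "('s, 'e) monoid_scheme \<Rightarrow> 's \<Rightarrow> bool" where
  "primitive_idempotent S e \<longleftrightarrow> e \<in> carrier S \<and> e \<otimes>\<^bsub>S\<^esub> e = e \<and>
     (\<forall>f\<in>carrier S. f \<otimes>\<^bsub>S\<^esub> f = f \<and> e \<otimes>\<^bsub>S\<^esub> f = f \<and> f \<otimes>\<^bsub>S\<^esub> e = f \<longrightarrow> f = e)"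

definition completely_simple :: "('s, 'e) monoid_scheme \<Rightarrow> bool" where
  "completely_simple S \<longleftrightarrow> is_semigroup S \<and> carrier S \<noteq> {} \<and>
     (\<forall>I. sg_ideal S I \<longrightarrow> I = carrier S) \<and>
     (\<exists>e. primitive_idempotent S e)"

definition sub_struct :: "('s, 'e) monoid_scheme \<Rightarrow> 's set \<Rightarrow> 's \<Rightarrow> 's monoid" where
  "sub_struct S H e = \<lparr>carrier = H, mult = mult S, one = e\<rparr>"

definition subgroup_of_sg :: "('s, 'e) monoid_scheme \<Rightarrow> 's set \<Rightarrow> bool" where
  "subgroup_of_sg S H \<longleftrightarrow> H \<subseteq> carrier S \<and> (\<exists>e. group (sub_struct S H e))"

definition maximal_subgroup :: "('s, 'e) monoid_scheme \<Rightarrow> 's set \<Rightarrow> bool" where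
  "maximal_subgroup S H \<longleftrightarrow> subgroup_of_sg S H \<and>
     (\<forall>K. subgroup_of_sg S K \<and> H \<subseteq> K \<longrightarrow> K = H)"

definition finitely_generated_sg :: "('s, 'e) monoid_scheme \<Rightarrow> bool" where
  "finitely_generated_sg S \<longleftrightarrow> (\<exists>A. finite A \<and> A \<subseteq> carrier S \<and>
     (\<forall>s\<in>carrier S. \<exists>w\<in>lists A. w \<noteq> [] \<and>
        foldl (\<lambda>x y. x \<otimes>\<^bsub>S\<^esub> y) (hd w) (tl w) = s))"

text \<open>The semigroup morphism \<open>Y\<^sup>+ \<rightarrow> S\<close> extending the letter map \<open>t\<close>
  (only meaningful on nonempty words).\<close>
definition sg_eval :: "('s, 'e) monoid_scheme \<Rightarrow> ('y \<Rightarrow> 's) \<Rightarrow> 'y list \<Rightarrow> 's" where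
  "sg_eval S t w = foldl (\<lambda>x y. x \<otimes>\<^bsub>S\<^esub> t y) (t (hd w)) (tl w)"

definition mon_eval :: "('g, 'b) monoid_scheme \<Rightarrow> ('x \<Rightarrow> 'g) \<Rightarrow> 'x list \<Rightarrow> 'g" where
  "mon_eval G s u = foldr (\<lambda>x a. s x \<otimes>\<^bsub>G\<^esub> a) u \<one>\<^bsub>G\<^esub>"

definition sg_gen_choice :: "('s, 'e) monoid_scheme \<Rightarrow> 'y set \<Rightarrow> ('y \<Rightarrow> 's) \<Rightarrow> bool" where
  "sg_gen_choice S Y t \<longleftrightarrow> finite Y \<and> t ` Y \<subseteq> carrier S \<and>
     (\<forall>x\<in>carrier S. \<exists>w\<in>lists Y. w \<noteq> [] \<and> sg_eval S t w = x)"

definition mon_gen_choice :: "('g, 'b) monoid_scheme \<Rightarrow> 'x set \<Rightarrow> ('x \<Rightarrow> 'g) \<Rightarrow> bool" where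
  "mon_gen_choice G X s \<longleftrightarrow> finite X \<and> s ` X \<subseteq> carrier G \<and>
     (\<forall>g\<in>carrier G. \<exists>u\<in>lists X. mon_eval G s u = g)"

definition word_problem :: "('g, 'b) monoid_scheme \<Rightarrow> 'x set \<Rightarrow> ('x \<Rightarrow> 'g) \<Rightarrow> 'x list set" where
  "word_problem G X s = {u \<in> lists X. mon_eval G s u = \<one>\<^bsub>G\<^esub>}"

datatype 'y hat = Pos 'y | Bar 'y

definition hat_alph :: "'y set \<Rightarrow> 'y hat set" where
  "hat_alph Y = Pos ` Y \<union> Bar ` Y"

text \<open>Paths in the loop automaton of a monoid (carrier \<open>M\<close>, multiplication \<open>mul\<close>)
  with generator images \<open>gen y\<close> (\<open>y \<in> Y\<close>): edge \<open>a \<rightarrow> a(y\<sigma>)\<close> labelled \<open>y\<close>,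
  edge \<open>a(y\<sigma>) \<rightarrow> a\<close> labelled \<open>\<overline>y\<close>.\<close>
inductive loop_path :: "'m set \<Rightarrow> ('m \<Rightarrow> 'm \<Rightarrow> 'm) \<Rightarrow> 'y set \<Rightarrow> ('y \<Rightarrow> 'm)
    \<Rightarrow> 'm \<Rightarrow> 'y hat list \<Rightarrow> 'm \<Rightarrow> bool"
  for M mul Y gen where
  lp_nil: "a \<in> M \<Longrightarrow> loop_path M mul Y gen a [] a"
| lp_pos: "a \<in> M \<Longrightarrow> y \<in> Y \<Longrightarrow> loop_path M mul Y gen (mul a (gen y)) w b
            \<Longrightarrow> loop_path M mul Y gen a (Pos y # w) b"
| lp_bar: "a \<in> M \<Longrightarrow> y \<in> Y \<Longrightarrow> loop_path M mul Y gen a w b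
            \<Longrightarrow> loop_path M mul Y gen (mul a (gen y)) (Bar y # w) b"

definition loop_problem :: "'m set \<Rightarrow> ('m \<Rightarrow> 'm \<Rightarrow> 'm) \<Rightarrow> 'm \<Rightarrow> 'y set \<Rightarrow> ('y \<Rightarrow> 'm)
    \<Rightarrow> 'y hat list set" where
  "loop_problem M mul e Y gen = {w. loop_path M mul Y gen e w e}"

text \<open>\<open>S\<^sup>1\<close>: \<open>S\<close> with a new identity \<open>None\<close> adjoined.\<close>
fun mult1 :: "('s, 'e) monoid_scheme \<Rightarrow> 's option \<Rightarrow> 's option \<Rightarrow> 's option" where
  "mult1 S None b = b"
| "mult1 S (Some a) None = Some a"
| "mult1 S (Some a) (Some b) = Some (a \<otimes>\<^bsub>S\<^esub> b)"

definition carrier1 :: "('s, 'e) monoid_scheme \<Rightarrow> 's option set" where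
  "carrier1 S = insert None (Some ` carrier S)"

definition L_tau :: "('s, 'e) monoid_scheme \<Rightarrow> 'y set \<Rightarrow> ('y \<Rightarrow> 's) \<Rightarrow> 'y hat list set" where
  "L_tau S Y t = loop_problem (carrier1 S) (mult1 S) None Y (\<lambda>y. Some (t y))"

text \<open>Edges are \<open>(p, u, v, q)\<close>: from \<open>p\<close> to \<open>q\<close> labelled \<open>(u,v)\<close>.\<close>
inductive trans_run :: "(nat \<times> 'x list \<times> 'z list \<times> nat) set
    \<Rightarrow> nat \<Rightarrow> 'x list \<Rightarrow> 'z list \<Rightarrow> nat \<Rightarrow> bool" for E where
  tr_nil: "trans_run E p [] [] p"
| tr_step: "(p, u, v, q) \<in> E \<Longrightarrow> trans_run E q u' v' r \<Longrightarrow> trans_run E p (u @ u') (v @ v') r"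

definition rational_transduction :: "'x set \<Rightarrow> 'z set \<Rightarrow> ('x list \<times> 'z list) set \<Rightarrow> bool" where
  "rational_transduction X Z \<rho> \<longleftrightarrow>
     (\<exists>(Q :: nat set) E q0 F. finite Q \<and> finite E \<and> q0 \<in> Q \<and> F \<subseteq> Q \<and>
        (\<forall>(p, u, v, q) \<in> E. p \<in> Q \<and> q \<in> Q \<and> u \<in> lists X \<and> v \<in> lists Z) \<and>
        \<rho> = {(u, v). \<exists>f\<in>F. trans_run E q0 u v f})"

definition rel_image :: "'x list set \<Rightarrow> ('x list \<times> 'z list) set \<Rightarrow> 'z list set" where
  "rel_image L \<rho> = {v. \<exists>u\<in>L. (u, v) \<in> \<rho>}"

definition kleene :: "'z list set \<Rightarrow> 'z list set" where
  "kleene K = {concat ws | ws. set ws \<subseteq> K}"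

end

theory Submission
  imports Defs
begin

locale cs =
  fixes S :: "('s, 'e) monoid_scheme" (structure) and e :: 's
  assumes closed [intro, simp]: "x \<in> carrier S \<Longrightarrow> y \<in> carrier S \<Longrightarrow> x \<otimes> y \<in> carrier S"
    and assoc: "x \<in> carrier S \<Longrightarrow> y \<in> carrier S \<Longrightarrow> z \<in> carrier S \<Longrightarrow> (x \<otimes> y) \<otimes> z = x \<otimes> (y \<otimes> z)"
    and simple: "a \<in> carrier S \<Longrightarrow> b \<in> carrier S \<Longrightarrow> \<exists>x\<in>carrier S. \<exists>y\<in>carrier S. a = x \<otimes> b \<otimes> y"
    and e_in [simp]: "e \<in> carrier S"
    and e_idem: "e \<otimes> e = e"
    and prim: "f \<in> carrier S \<Longrightarrow> f \<otimes> f = f \<Longrightarrow> e \<otimes> f = f \<Longrightarrow> f \<otimes> e = f \<Longrightarrow> f = e"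
begin

lemma ee [simp]: "z \<in> carrier S \<Longrightarrow> e \<otimes> (e \<otimes> z) = e \<otimes> z"
  by (metis assoc e_idem e_in)

lemma ee' [simp]: "e \<otimes> e = e" by (rule e_idem)

lemma Ap: assumes w: "w \<in> carrier S" shows "\<exists>u\<in>carrier S. u \<otimes> (w \<otimes> e) = e"
proof -
  obtain x y where x: "x \<in> carrier S" and y: "y \<in> carrier S" and K: "e = x \<otimes> (w \<otimes> e) \<otimes> y"
    using simple[of e "w \<otimes> e"] w by auto
  have K1: "x \<otimes> (w \<otimes> (e \<otimes> y)) = e" using K x y w by (simp add: assoc)
  have K2: "\<And>z. z \<in> carrier S \<Longrightarrow> x \<otimes> (w \<otimes> (e \<otimes> (y \<otimes> z))) = e \<otimes> z"
    using K1 x y w by (metis assoc closed e_in)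
  define g where "g = e \<otimes> (y \<otimes> (e \<otimes> (x \<otimes> (w \<otimes> e))))"
  have gC: "g \<in> carrier S" using x y w by (simp add: g_def)
  have "g \<otimes> g = g" using x y w by (simp add: g_def assoc K2)
  moreover have "e \<otimes> g = g" using x y w by (simp add: g_def)
  moreover have "g \<otimes> e = g" using x y w by (simp add: g_def assoc)
  ultimately have "g = e" using prim gC by blast
  then show ?thesis using x y w by (intro bexI[of _ "e \<otimes> (y \<otimes> (e \<otimes> x))"]) (auto simp: g_def assoc)
qed

lemma Bp: assumes w: "w \<in> carrier S" shows "\<exists>v\<in>carrier S. (e \<otimes> w) \<otimes> v = e"
proof -
  obtain x y where x: "x \<in> carrier S" and y: "y \<in> carrier S" and K: "e = x \<otimes> (e \<otimes> w) \<otimes> y"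
    using simple[of e "e \<otimes> w"] w by auto
  have K1: "x \<otimes> (e \<otimes> (w \<otimes> y)) = e" using K x y w by (simp add: assoc)
  have K2: "\<And>z. z \<in> carrier S \<Longrightarrow> x \<otimes> (e \<otimes> (w \<otimes> (y \<otimes> z))) = e \<otimes> z"
    using K1 x y w by (metis assoc closed e_in)
  define g where "g = e \<otimes> (w \<otimes> (y \<otimes> (e \<otimes> (x \<otimes> e))))"
  have gC: "g \<in> carrier S" using x y w by (simp add: g_def)
  have "g \<otimes> g = g" using x y w by (simp add: g_def assoc K2)
  moreover have "e \<otimes> g = g" using x y w by (simp add: g_def)
  moreover have "g \<otimes> e = g" using x y w by (simp add: g_def assoc)
  ultimately have "g = e" using prim gC by blast
  then show ?thesis using x y w by (intro bexI[of _ "y \<otimes> (e \<otimes> (x \<otimes> e))"]) (auto simp: g_def assoc)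
qed

lemma LemL: assumes a: "a \<in> carrier S" and z: "z \<in> carrier S" shows "\<exists>u\<in>carrier S. a = u \<otimes> (z \<otimes> a)"
proof -
  obtain x y where x: "x \<in> carrier S" and y: "y \<in> carrier S" and K: "a = x \<otimes> e \<otimes> y"
    using simple[of a e] a by auto
  obtain u' where u': "u' \<in> carrier S" "u' \<otimes> ((z \<otimes> x) \<otimes> e) = e" using Ap[of "z \<otimes> x"] z x by auto
  have "e \<otimes> y = u' \<otimes> (z \<otimes> a)" using u' x y z K by (metis assoc closed e_in)
  then have "a = (x \<otimes> u') \<otimes> (z \<otimes> a)" using u' x y z K a by (metis assoc closed e_in)
  then show ?thesis using x u' by blast
qed

lemma LemR: assumes a: "a \<in> carrier S" and z: "z \<in> carrier S" shows "\<exists>v\<in>carrier S. a = a \<otimes> z \<otimes> v"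
proof -
  obtain x y where x: "x \<in> carrier S" and y: "y \<in> carrier S" and K: "a = x \<otimes> e \<otimes> y"
    using simple[of a e] a by auto
  obtain v' where v': "v' \<in> carrier S" "(e \<otimes> (y \<otimes> z)) \<otimes> v' = e" using Bp[of "y \<otimes> z"] z y by auto
  have "x \<otimes> e = a \<otimes> z \<otimes> v'" using v' x y z K by (metis assoc closed e_in)
  then have "a = a \<otimes> z \<otimes> (v' \<otimes> y)" using v' x y z K a by (metis assoc closed e_in)
  then show ?thesis using y v' by blast
qed

definition Lr where "Lr a b \<longleftrightarrow> (\<exists>w\<in>carrier S. a = w \<otimes> b)"
definition Rr where "Rr a b \<longleftrightarrow> (\<exists>w\<in>carrier S. b = a \<otimes> w)"

lemma Lr_refl: "a \<in> carrier S \<Longrightarrow> Lr a a"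
  unfolding Lr_def using LemL[of a a] by (metis assoc closed)
lemma Lr_sym: "a \<in> carrier S \<Longrightarrow> b \<in> carrier S \<Longrightarrow> Lr a b \<Longrightarrow> Lr b a"
  unfolding Lr_def using LemL by metis
lemma Lr_trans: "a \<in> carrier S \<Longrightarrow> b \<in> carrier S \<Longrightarrow> c \<in> carrier S \<Longrightarrow> Lr a b \<Longrightarrow> Lr b c \<Longrightarrow> Lr a c"
  unfolding Lr_def by (metis assoc closed)
lemma Lr_mult: "a \<in> carrier S \<Longrightarrow> b \<in> carrier S \<Longrightarrow> Lr (a \<otimes> b) b"
  unfolding Lr_def by blast
lemma Rr_refl: "a \<in> carrier S \<Longrightarrow> Rr a a"
  unfolding Rr_def using LemR[of a a] by (metis assoc closed)
lemma Rr_sym: "a \<in> carrier S \<Longrightarrow> b \<in> carrier S \<Longrightarrow> Rr a b \<Longrightarrow> Rr b a"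
  unfolding Rr_def using LemR by metis
lemma Rr_trans: "a \<in> carrier S \<Longrightarrow> b \<in> carrier S \<Longrightarrow> c \<in> carrier S \<Longrightarrow> Rr a b \<Longrightarrow> Rr b c \<Longrightarrow> Rr a c"
  unfolding Rr_def by (metis assoc closed)
lemma Rr_mult: "a \<in> carrier S \<Longrightarrow> b \<in> carrier S \<Longrightarrow> Rr a (a \<otimes> b)"
  unfolding Rr_def by blast

lemma I1: assumes "a \<in> carrier S" "b \<in> carrier S" "w \<in> carrier S" "b = a \<otimes> w" "e \<otimes> a = e \<otimes> b"
  shows "a = b"
proof -
  obtain u where u: "u \<in> carrier S" "a = u \<otimes> (e \<otimes> a)" using LemL[of a e] assms by auto
  have "a = u \<otimes> (e \<otimes> b)" using u assms by metis
  also have "\<dots> = u \<otimes> (e \<otimes> a) \<otimes> w" using assms(1,3,4) u(1) by (metis assoc e_in closed)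
  also have "\<dots> = b" using u assms by metis
  finally show ?thesis .
qed

lemma I2: assumes "a \<in> carrier S" "b \<in> carrier S" "w \<in> carrier S" "b = w \<otimes> a" "a \<otimes> e = b \<otimes> e"
  shows "a = b"
proof -
  obtain v where v: "v \<in> carrier S" "a = a \<otimes> e \<otimes> v" using LemR[of a e] assms by auto
  have "a = b \<otimes> e \<otimes> v" using v assms by metis
  also have "\<dots> = w \<otimes> (a \<otimes> e \<otimes> v)" using assms(1,3,4) v(1) by (metis assoc e_in closed)
  also have "\<dots> = b" using v assms by metis
  finally show ?thesis .
qed

lemma CI: assumes x: "x \<in> carrier S" and s: "s \<in> carrier S" and "Rr s x" "Lr x s"
  and eq: "e \<otimes> x \<otimes> e = e \<otimes> s \<otimes> e" shows "x = s"
proof -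
  obtain w where w: "w \<in> carrier S" "x = w \<otimes> s" using assms unfolding Lr_def by auto
  obtain u where u: "u \<in> carrier S" "s = u \<otimes> (e \<otimes> s)" using LemL[of s e] s by auto
  have "e \<otimes> x = (e \<otimes> w \<otimes> u) \<otimes> (e \<otimes> s)" using w u s by (metis assoc closed e_in)
  then have "e \<otimes> s = e \<otimes> x" using I2[of "e \<otimes> s" "e \<otimes> x" "e \<otimes> w \<otimes> u"] eq s x w u by simp
  obtain w' where w': "w' \<in> carrier S" "x = s \<otimes> w'" using assms unfolding Rr_def by auto
  show ?thesis using I1[of s x w'] w' s x \<open>e \<otimes> s = e \<otimes> x\<close> by simp
qed

definition Hs where "Hs = (\<lambda>x. e \<otimes> x \<otimes> e) ` carrier S"

lemma Hs_E: "h \<in> Hs \<Longrightarrow> h \<in> carrier S \<and> e \<otimes> h = h \<and> h \<otimes> e = h"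
  unfolding Hs_def by (auto simp: assoc)

lemma Hs_C [simp]: "h \<in> Hs \<Longrightarrow> h \<in> carrier S" using Hs_E by blast
lemma Hs_l [simp]: "h \<in> Hs \<Longrightarrow> e \<otimes> h = h" using Hs_E by blast
lemma Hs_r [simp]: "h \<in> Hs \<Longrightarrow> h \<otimes> e = h" using Hs_E by blast
lemma Hs_I [simp]: "x \<in> carrier S \<Longrightarrow> e \<otimes> x \<otimes> e \<in> Hs" unfolding Hs_def by blast
lemma Hs_e [simp]: "e \<in> Hs" using Hs_I[of e] by simp
lemma Hs_mult [simp]: "a \<in> Hs \<Longrightarrow> b \<in> Hs \<Longrightarrow> a \<otimes> b \<in> Hs"
  using Hs_I[of "a \<otimes> b"] by (metis Hs_C Hs_l Hs_r assoc closed e_in)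

lemma Hs_inv_ex: assumes h: "h \<in> Hs" shows "\<exists>h'\<in>Hs. h' \<otimes> h = e \<and> h \<otimes> h' = e"
proof -
  obtain u where u: "u \<in> carrier S" "u \<otimes> (h \<otimes> e) = e" using Ap[of h] h by auto
  obtain v where v: "v \<in> carrier S" "(e \<otimes> h) \<otimes> v = e" using Bp[of h] h by auto
  have l: "(e \<otimes> u \<otimes> e) \<otimes> h = e" using u h by (metis Hs_C Hs_l Hs_r assoc closed e_in ee')
  have r: "h \<otimes> (e \<otimes> v \<otimes> e) = e" using v h by (metis Hs_C Hs_l Hs_r assoc closed e_in ee')
  have "e \<otimes> u \<otimes> e = e \<otimes> v \<otimes> e"
  proof -
    have m1: "e \<otimes> u \<otimes> e \<in> Hs" "e \<otimes> v \<otimes> e \<in> Hs" using u v by auto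
    have "e \<otimes> u \<otimes> e = (e \<otimes> u \<otimes> e) \<otimes> e" using m1 by simp
    also have "\<dots> = (e \<otimes> u \<otimes> e) \<otimes> (h \<otimes> (e \<otimes> v \<otimes> e))" using r by simp
    also have "\<dots> = ((e \<otimes> u \<otimes> e) \<otimes> h) \<otimes> (e \<otimes> v \<otimes> e)" using m1 h by (simp only: assoc Hs_C)
    also have "\<dots> = e \<otimes> (e \<otimes> v \<otimes> e)" using l by simp
    also have "\<dots> = e \<otimes> v \<otimes> e" using m1 by simp
    finally show ?thesis .
  qed
  then show ?thesis using l r u v by (intro bexI[of _ "e \<otimes> u \<otimes> e"]) auto
qed

definition invH where "invH h = (SOME h'. h' \<in> Hs \<and> h' \<otimes> h = e \<and> h \<otimes> h' = e)"

lemma invH: "h \<in> Hs \<Longrightarrow> invH h \<in> Hs \<and> invH h \<otimes> h = e \<and> h \<otimes> invH h = e"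
  unfolding invH_def using someI_ex[OF Hs_inv_ex[unfolded Bex_def]] by blast

lemma group_H: "group (sub_struct S Hs e)"
  unfolding sub_struct_def
  by (rule groupI) (auto simp: assoc dest: invH)

lemma invH_C [simp]: "h \<in> Hs \<Longrightarrow> invH h \<in> carrier S" using invH by (meson Hs_C)
lemma invH_H [simp]: "h \<in> Hs \<Longrightarrow> invH h \<in> Hs" using invH by blast
lemma invH_l [simp]: "h \<in> Hs \<Longrightarrow> invH h \<otimes> h = e" using invH by blast
lemma invH_r [simp]: "h \<in> Hs \<Longrightarrow> h \<otimes> invH h = e" using invH by blast

definition cc where "cc a b = invH (e \<otimes> a \<otimes> e) \<otimes> (e \<otimes> a \<otimes> b \<otimes> e)"

lemma cc_H [simp]: "a \<in> carrier S \<Longrightarrow> b \<in> carrier S \<Longrightarrow> cc a b \<in> Hs"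
proof -
  assume a: "a \<in> carrier S" and b: "b \<in> carrier S"
  have "e \<otimes> a \<otimes> b \<otimes> e = e \<otimes> (a \<otimes> b) \<otimes> e" using a b by (simp add: assoc)
  then have "e \<otimes> a \<otimes> b \<otimes> e \<in> Hs" using a b Hs_I[of "a \<otimes> b"] by simp
  then show "cc a b \<in> Hs" unfolding cc_def using a by simp
qed

lemma INC: assumes s: "s \<in> carrier S" and a: "a \<in> carrier S" and t1: "t1 \<in> carrier S" and L: "Lr s a"
  shows "e \<otimes> (s \<otimes> t1) \<otimes> e = (e \<otimes> s \<otimes> e) \<otimes> cc a t1"
proof -
  define k where "k = invH (e \<otimes> a \<otimes> e)"
  have k: "k \<in> Hs" "k \<otimes> (e \<otimes> a \<otimes> e) = e" using a by (auto simp: k_def)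
  have kC: "k \<in> carrier S" using k by simp
  define x where "x = (e \<otimes> s \<otimes> e) \<otimes> k \<otimes> (e \<otimes> a)"
  obtain w1 where w1: "w1 \<in> carrier S" "a = w1 \<otimes> s" using Lr_sym[OF s a L] unfolding Lr_def by auto
  obtain u where u: "u \<in> carrier S" "s = u \<otimes> (e \<otimes> s)" using LemL[of s e] s by auto
  have xC: "x \<in> carrier S" using s a kC by (simp add: x_def)
  have "x = ((e \<otimes> s \<otimes> e) \<otimes> k \<otimes> e \<otimes> w1) \<otimes> s" unfolding x_def using w1 s kC by (simp add: assoc)
  also have "\<dots> = ((e \<otimes> s \<otimes> e) \<otimes> k \<otimes> e \<otimes> w1 \<otimes> u) \<otimes> (e \<otimes> s)" using u s kC w1 by (metis assoc closed e_in)
  finally have x1: "x = ((e \<otimes> s \<otimes> e) \<otimes> k \<otimes> e \<otimes> w1 \<otimes> u) \<otimes> (e \<otimes> s)" .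
  have "x \<otimes> e = (e \<otimes> s \<otimes> e) \<otimes> (k \<otimes> (e \<otimes> a \<otimes> e))" unfolding x_def using s a kC by (simp add: assoc)
  also have "\<dots> = e \<otimes> s \<otimes> e" using k s by (simp add: assoc)
  finally have x2: "(e \<otimes> s) \<otimes> e = x \<otimes> e" using s by (simp add: assoc)
  have esx: "e \<otimes> s = x" using I2[OF _ xC _ x1 x2] s kC w1 u by simp
  have "e \<otimes> (s \<otimes> t1) \<otimes> e = x \<otimes> t1 \<otimes> e" using esx s t1 by (simp add: assoc flip: esx)
  also have "\<dots> = (e \<otimes> s \<otimes> e) \<otimes> cc a t1" unfolding x_def cc_def k_def[symmetric] using s a t1 kC by (simp add: assoc)
  finally show ?thesis .
qed

lemma PRED: assumes s: "s \<in> carrier S" and a: "a \<in> carrier S" and t1: "t1 \<in> carrier S" and g: "g \<in> Hs"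
  and L: "Lr s t1" and eq: "e \<otimes> s \<otimes> e = g \<otimes> cc a t1"
  shows "\<exists>s2\<in>carrier S. Rr s s2 \<and> Lr s2 a \<and> e \<otimes> s2 \<otimes> e = g \<and> s2 \<otimes> t1 = s"
proof -
  define h where "h = invH (e \<otimes> s \<otimes> e)"
  define k where "k = invH (e \<otimes> a \<otimes> e)"
  have h: "h \<in> Hs" "(e \<otimes> s \<otimes> e) \<otimes> h = e" using s by (auto simp: h_def)
  have k: "k \<in> Hs" "k \<otimes> (e \<otimes> a \<otimes> e) = e" using a by (auto simp: k_def)
  have hC: "h \<in> carrier S" and kC: "k \<in> carrier S" and gC: "g \<in> carrier S" using h k g by auto
  define m where "m = h \<otimes> g \<otimes> k \<otimes> e"
  have mC: "m \<in> carrier S" using hC kC gC by (simp add: m_def)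
  define s2 where "s2 = s \<otimes> e \<otimes> m \<otimes> a"
  have s2C: "s2 \<in> carrier S" using s mC a by (simp add: s2_def)
  have R: "Rr s s2" unfolding Rr_def s2_def using s mC a by (intro bexI[of _ "e \<otimes> m \<otimes> a"]) (auto simp: assoc)
  have La: "Lr s2 a" unfolding Lr_def s2_def using s mC a by (intro bexI[of _ "s \<otimes> e \<otimes> m"]) auto
  have "e \<otimes> s2 \<otimes> e = ((e \<otimes> s \<otimes> e) \<otimes> h) \<otimes> g \<otimes> (k \<otimes> (e \<otimes> a \<otimes> e))"
    unfolding s2_def m_def using s a hC kC gC by (simp add: assoc)
  also have "\<dots> = g" using h k g by (simp add: assoc)
  finally have g2: "e \<otimes> s2 \<otimes> e = g" .
  define x where "x = s2 \<otimes> t1"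
  have xC: "x \<in> carrier S" using s2C t1 by (simp add: x_def)
  have Rx: "Rr s x" unfolding x_def using Rr_trans[OF s s2C _ R Rr_mult[OF s2C t1]] s2C t1 by simp
  have Lx: "Lr x s" unfolding x_def using Lr_trans[OF _ t1 s Lr_mult[OF s2C t1] Lr_sym[OF s t1 L]] s2C t1 by simp
  have "e \<otimes> x \<otimes> e = g \<otimes> cc a t1" unfolding x_def using INC[OF s2C a t1 La] g2 by simp
  then have "x = s" using CI[OF xC s Rx Lx] eq by simp
  then show ?thesis using s2C R La g2 unfolding x_def by blast
qed

end
locale mainloc = cs S e
  for S :: "('s, 'e) monoid_scheme" (structure) and e :: 's +
  fixes G :: "('g, 'b) monoid_scheme" and X :: "'x set" and sg :: "'x \<Rightarrow> 'g"
    and Y :: "'y set" and t :: "'y \<Rightarrow> 's" and phi :: "'s \<Rightarrow> 'g"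
    and f :: "'y \<times> 'y \<Rightarrow> nat" and n :: nat
  assumes grpG: "group G"
    and mgc: "mon_gen_choice G X sg"
    and tY: "\<And>y. y \<in> Y \<Longrightarrow> t y \<in> carrier S"
    and finY: "finite Y"
    and gen: "\<And>x. x \<in> carrier S \<Longrightarrow> \<exists>y\<in>Y. Lr x (t y)"
    and phiC: "\<And>h. h \<in> Hs \<Longrightarrow> phi h \<in> carrier G"
    and phiM: "\<And>h1 h2. h1 \<in> Hs \<Longrightarrow> h2 \<in> Hs \<Longrightarrow> phi (h1 \<otimes> h2) = phi h1 \<otimes>\<^bsub>G\<^esub> phi h2"
    and phiI: "inj_on phi Hs"
    and finj: "inj_on f (Y \<times> Y)"
    and frange: "f ` (Y \<times> Y) = {i. i < n}"
begin

interpretation G: group G by (rule grpG)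

lemma phie: "phi e = \<one>\<^bsub>G\<^esub>"
proof -
  have "phi e \<otimes>\<^bsub>G\<^esub> phi e = phi e" using phiM[of e e] by simp
  then show ?thesis using phiC[of e] by simp
qed

lemma f_lt: "y0 \<in> Y \<Longrightarrow> y \<in> Y \<Longrightarrow> f (y0, y) < n"
  using frange by blast

lemma f_eq: "y0 \<in> Y \<Longrightarrow> y \<in> Y \<Longrightarrow> y0' \<in> Y \<Longrightarrow> y' \<in> Y \<Longrightarrow> f (y0, y) = f (y0', y') \<Longrightarrow> y0 = y0' \<and> y = y'"
  using finj unfolding inj_on_def by blast

lemma sgX: "x \<in> X \<Longrightarrow> sg x \<in> carrier G" using mgc unfolding mon_gen_choice_def by blast

lemma me_C: "u \<in> lists X \<Longrightarrow> mon_eval G sg u \<in> carrier G"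
  by (induction u) (auto simp: mon_eval_def sgX)

lemma me_app: "u1 \<in> lists X \<Longrightarrow> u2 \<in> lists X \<Longrightarrow>
   mon_eval G sg (u1 @ u2) = mon_eval G sg u1 \<otimes>\<^bsub>G\<^esub> mon_eval G sg u2"
proof (induction u1)
  case Nil then show ?case using me_C[of u2] by (simp add: mon_eval_def)
next
  case (Cons x u1)
  then show ?case using me_C[of u1] me_C[of u2] sgX[of x]
    by (simp add: mon_eval_def G.m_assoc)
qed

definition rep where "rep h = (SOME u. u \<in> lists X \<and> mon_eval G sg u = phi h)"

lemma rep: assumes "h \<in> Hs" shows "rep h \<in> lists X \<and> mon_eval G sg (rep h) = phi h"
proof -
  have "\<exists>u. u \<in> lists X \<and> mon_eval G sg u = phi h" using mgc phiC[OF assms] unfolding mon_gen_choice_def by blast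
  then show ?thesis unfolding rep_def by (rule someI_ex)
qed

definition E0 where "E0 = {(n, rep (e \<otimes> t y0 \<otimes> e), [Pos y0], f (y0, y0)) | y0. y0 \<in> Y}"
definition E1 where "E1 = {(f (y0, y), rep (cc (t y) (t y1)), [Pos y1], f (y0, y1)) | y0 y y1.
   y0 \<in> Y \<and> y \<in> Y \<and> y1 \<in> Y}"
definition E2 where "E2 = {(f (y0, y), rep (invH (cc (t y') (t y1))), [Bar y1], f (y0, y')) | y0 y y' y1.
   y0 \<in> Y \<and> y \<in> Y \<and> y' \<in> Y \<and> y1 \<in> Y \<and> Lr (t y) (t y1)}"
definition E3 where "E3 = {(f (y0, y), rep (invH (e \<otimes> t y1 \<otimes> e)), [Bar y1], Suc n) | y0 y y1.
   y0 \<in> Y \<and> y \<in> Y \<and> y1 \<in> Y \<and> Lr (t y) (t y1) \<and> Rr (t y0) (t y1)}"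
definition EE where "EE = E0 \<union> E1 \<union> E2 \<union> E3"

lemma finite_EE: "finite EE"
proof -
  have "E0 \<subseteq> (\<lambda>y0. (n, rep (e \<otimes> t y0 \<otimes> e), [Pos y0], f (y0, y0))) ` Y" unfolding E0_def by auto
  moreover have "E1 \<subseteq> (\<lambda>(y0, y, y1). (f (y0, y), rep (cc (t y) (t y1)), [Pos y1], f (y0, y1))) ` (Y \<times> Y \<times> Y)"
    unfolding E1_def by force
  moreover have "E2 \<subseteq> (\<lambda>(y0, y, y', y1). (f (y0, y), rep (invH (cc (t y') (t y1))), [Bar y1], f (y0, y'))) ` (Y \<times> Y \<times> Y \<times> Y)"
    unfolding E2_def by force
  moreover have "E3 \<subseteq> (\<lambda>(y0, y, y1). (f (y0, y), rep (invH (e \<otimes> t y1 \<otimes> e)), [Bar y1], Suc n)) ` (Y \<times> Y \<times> Y)"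
    unfolding E3_def by force
  ultimately show ?thesis unfolding EE_def using finY
    by (meson finite_SigmaI finite_Un finite_imageI finite_subset)
qed

lemma ete_H [simp]: "y \<in> Y \<Longrightarrow> e \<otimes> t y \<otimes> e \<in> Hs" using tY by simp

lemma EE_props: assumes "(p, u, v, q) \<in> EE"
  shows "p \<le> Suc n \<and> q \<le> Suc n \<and> u \<in> lists X \<and> v \<in> lists (hat_alph Y) \<and> p \<noteq> Suc n"
proof -
  have HA: "\<And>y. y \<in> Y \<Longrightarrow> Pos y \<in> hat_alph Y \<and> Bar y \<in> hat_alph Y" unfolding hat_alph_def by blast
  have fl: "\<And>a b. a \<in> Y \<Longrightarrow> b \<in> Y \<Longrightarrow> f (a, b) \<le> Suc n \<and> f (a, b) \<noteq> Suc n"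
    using f_lt by (metis less_SucI less_imp_le_nat less_irrefl)
  from assms consider "(p, u, v, q) \<in> E0" | "(p, u, v, q) \<in> E1" | "(p, u, v, q) \<in> E2" | "(p, u, v, q) \<in> E3"
    unfolding EE_def by blast
  then show ?thesis
  proof cases
    case 1 then obtain y0 where "y0 \<in> Y" "p = n" "u = rep (e \<otimes> t y0 \<otimes> e)" "v = [Pos y0]" "q = f (y0, y0)"
      unfolding E0_def by blast
    then show ?thesis using fl HA rep[of "e \<otimes> t y0 \<otimes> e"] by simp
  next
    case 2 then obtain y0 y y1 where "y0 \<in> Y" "y \<in> Y" "y1 \<in> Y" "p = f (y0, y)" "u = rep (cc (t y) (t y1))" "v = [Pos y1]" "q = f (y0, y1)"
      unfolding E1_def by blast
    then show ?thesis using fl HA rep[of "cc (t y) (t y1)"] tY by simp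
  next
    case 3 then obtain y0 y y' y1 where "y0 \<in> Y" "y \<in> Y" "y' \<in> Y" "y1 \<in> Y" "p = f (y0, y)" "u = rep (invH (cc (t y') (t y1)))" "v = [Bar y1]" "q = f (y0, y')"
      unfolding E2_def by blast
    then show ?thesis using fl HA rep[of "invH (cc (t y') (t y1))"] tY by simp
  next
    case 4 then obtain y0 y y1 where "y0 \<in> Y" "y \<in> Y" "y1 \<in> Y" "p = f (y0, y)" "u = rep (invH (e \<otimes> t y1 \<otimes> e))" "v = [Bar y1]" "q = Suc n"
      unfolding E3_def by blast
    then show ?thesis using fl HA rep[of "invH (e \<otimes> t y1 \<otimes> e)"] tY by simp
  qed
qed

lemma run_lists: "trans_run EE p u v q \<Longrightarrow> u \<in> lists X"
  by (induction rule: trans_run.induct) (auto dest: EE_props)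

abbreviation LP where "LP a w b \<equiv> loop_path (carrier1 S) (mult1 S) Y (\<lambda>y. Some (t y)) a w b"

lemma None_in [simp]: "None \<in> carrier1 S" unfolding carrier1_def by simp
lemma Some_in [simp]: "(Some x \<in> carrier1 S) = (x \<in> carrier S)" unfolding carrier1_def by auto

lemma mult1_SS [simp]: "mult1 S (Some a) (Some b) = Some (a \<otimes> b)" by simp

lemma sound: "trans_run EE p u v r \<Longrightarrow> r = Suc n \<Longrightarrow> (p = Suc n \<longrightarrow> u = [] \<and> v = []) \<and>
  (\<forall>y0\<in>Y. \<forall>y\<in>Y. p = f (y0, y) \<longrightarrow> (\<forall>x\<in>carrier S. Rr (t y0) x \<longrightarrow> Lr x (t y) \<longrightarrow>
      phi (e \<otimes> x \<otimes> e) \<otimes>\<^bsub>G\<^esub> mon_eval G sg u = \<one>\<^bsub>G\<^esub> \<longrightarrow> LP (Some x) v None))"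
proof (induction rule: trans_run.induct)
  case (tr_nil p)
  then show ?case using f_lt by fastforce
next
  case (tr_step p u v q u' v' r)
  note edge = tr_step(1) and run = tr_step(2) and IH = tr_step(3)[OF tr_step(4)]
  have ul: "u \<in> lists X" "u' \<in> lists X" using EE_props[OF edge] run_lists[OF run] by auto
  show ?case
  proof (rule conjI)
    show "p = Suc n \<longrightarrow> u @ u' = [] \<and> v @ v' = []" using EE_props[OF edge] by simp
  next
    show "\<forall>y0\<in>Y. \<forall>y\<in>Y. p = f (y0, y) \<longrightarrow> (\<forall>x\<in>carrier S. Rr (t y0) x \<longrightarrow> Lr x (t y) \<longrightarrow>
      phi (e \<otimes> x \<otimes> e) \<otimes>\<^bsub>G\<^esub> mon_eval G sg (u @ u') = \<one>\<^bsub>G\<^esub> \<longrightarrow> LP (Some x) (v @ v') None)"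
    proof (intro ballI impI)
    fix y0 y x assume y0: "y0 \<in> Y" and y: "y \<in> Y" and pf: "p = f (y0, y)" and x: "x \<in> carrier S"
      and R: "Rr (t y0) x" and L: "Lr x (t y)"
      and cond0: "phi (e \<otimes> x \<otimes> e) \<otimes>\<^bsub>G\<^esub> mon_eval G sg (u @ u') = \<one>\<^bsub>G\<^esub>"
    have cond: "phi (e \<otimes> x \<otimes> e) \<otimes>\<^bsub>G\<^esub> (mon_eval G sg u \<otimes>\<^bsub>G\<^esub> mon_eval G sg u') = \<one>\<^bsub>G\<^esub>"
      using cond0 me_app[OF ul] by simp
    have M'C: "mon_eval G sg u' \<in> carrier G" using me_C[OF ul(2)] .
    have exeH: "e \<otimes> x \<otimes> e \<in> Hs" using x by simp
    have ty0: "t y0 \<in> carrier S" and ty: "t y \<in> carrier S" using tY y0 y by auto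
    from edge consider "(p, u, v, q) \<in> E0" | "(p, u, v, q) \<in> E1" | "(p, u, v, q) \<in> E2" | "(p, u, v, q) \<in> E3"
      unfolding EE_def by blast
    then show "LP (Some x) (v @ v') None"
    proof cases
      case 1 then have "p = n" unfolding E0_def by blast
      then show ?thesis using pf f_lt[OF y0 y] by simp
    next
      case 2 then obtain y0' y' y1 where yy: "y0' \<in> Y" "y' \<in> Y" "y1 \<in> Y" and
        eqs: "p = f (y0', y')" "u = rep (cc (t y') (t y1))" "v = [Pos y1]" "q = f (y0', y1)"
        unfolding E1_def by blast
      have "y0' = y0" "y' = y" using f_eq[OF y0 y yy(1,2)] pf eqs(1) by auto
      note eqs = eqs[unfolded this]
      have ty1: "t y1 \<in> carrier S" using tY yy by auto
      define x' where "x' = x \<otimes> t y1"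
      have x'C: "x' \<in> carrier S" using x ty1 by (simp add: x'_def)
      have inc: "e \<otimes> x' \<otimes> e = (e \<otimes> x \<otimes> e) \<otimes> cc (t y) (t y1)" unfolding x'_def using INC[OF x ty ty1 L] .
      have cH: "cc (t y) (t y1) \<in> Hs" using ty ty1 by simp
      have "phi (e \<otimes> x' \<otimes> e) \<otimes>\<^bsub>G\<^esub> mon_eval G sg u' = \<one>\<^bsub>G\<^esub>"
        using cond unfolding inc eqs(2) using rep[OF cH] phiM[OF exeH cH] phiC[OF exeH] phiC[OF cH] M'C
        by (simp add: G.m_assoc)
      moreover have "Rr (t y0) x'" unfolding x'_def using Rr_trans[OF ty0 x _ R Rr_mult[OF x ty1]] x ty1 by simp
      moreover have "Lr x' (t y1)" unfolding x'_def using Lr_mult[OF x ty1] .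
      ultimately have "LP (Some x') v' None" using IH eqs(4) y0 yy(3) x'C by blast
      then show ?thesis unfolding eqs(3) x'_def using x yy(3) by (auto intro: loop_path.lp_pos)
    next
      case 3 then obtain y0' y1' y' y1 where yy: "y0' \<in> Y" "y1' \<in> Y" "y' \<in> Y" "y1 \<in> Y" and
        LL: "Lr (t y1') (t y1)" and
        eqs: "p = f (y0', y1')" "u = rep (invH (cc (t y') (t y1)))" "v = [Bar y1]" "q = f (y0', y')"
        unfolding E2_def by blast
      have "y0' = y0" "y1' = y" using f_eq[OF y0 y yy(1,2)] pf eqs(1) by auto
      note eqs = eqs[unfolded this] and LL = LL[unfolded this]
      have ty1: "t y1 \<in> carrier S" and ty': "t y' \<in> carrier S" using tY yy by auto
      define c where "c = cc (t y') (t y1)"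
      have cH: "c \<in> Hs" using ty' ty1 by (simp add: c_def)
      define g where "g = (e \<otimes> x \<otimes> e) \<otimes> invH c"
      have gH: "g \<in> Hs" using exeH cH by (simp add: g_def)
      have "g \<otimes> c = (e \<otimes> x \<otimes> e) \<otimes> (invH c \<otimes> c)" unfolding g_def using exeH cH by (simp add: assoc)
      also have "\<dots> = e \<otimes> x \<otimes> e" using cH exeH by simp
      finally have gc: "e \<otimes> x \<otimes> e = g \<otimes> cc (t y') (t y1)" unfolding c_def by simp
      have Lx1: "Lr x (t y1)" using Lr_trans[OF x ty ty1 L LL] .
      obtain x2 where x2: "x2 \<in> carrier S" "Rr x x2" "Lr x2 (t y')" "e \<otimes> x2 \<otimes> e = g" "x2 \<otimes> t y1 = x"
        using PRED[OF x ty' ty1 gH Lx1 gc] by blast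
      have "phi g \<otimes>\<^bsub>G\<^esub> mon_eval G sg u' = \<one>\<^bsub>G\<^esub>"
        using cond unfolding eqs(2) c_def[symmetric] using rep[of "invH c"] cH phiM[OF exeH, of "invH c"] phiC[OF exeH] phiC[of "invH c"] M'C
        by (simp add: G.m_assoc g_def)
      moreover have "Rr (t y0) x2" using Rr_trans[OF ty0 x x2(1) R x2(2)] .
      ultimately have "LP (Some x2) v' None" using IH eqs(4) y0 yy(3) x2 by blast
      then have "LP (mult1 S (Some x2) (Some (t y1))) (Bar y1 # v') None"
        using x2 yy(4) by (intro loop_path.lp_bar) auto
      then show ?thesis unfolding eqs(3) using x2(5) by simp
    next
      case 4 then obtain y0' y1' y1 where yy: "y0' \<in> Y" "y1' \<in> Y" "y1 \<in> Y" and
        LL: "Lr (t y1') (t y1)" and RR: "Rr (t y0') (t y1)" and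
        eqs: "p = f (y0', y1')" "u = rep (invH (e \<otimes> t y1 \<otimes> e))" "v = [Bar y1]" "q = Suc n"
        unfolding E3_def by blast
      have "y0' = y0" "y1' = y" using f_eq[OF y0 y yy(1,2)] pf eqs(1) by auto
      note eqs = eqs[unfolded this] and LL = LL[unfolded this] and RR = RR[unfolded this]
      have ty1: "t y1 \<in> carrier S" using tY yy by auto
      have nil: "u' = []" "v' = []" using IH eqs(4) by auto
      define k where "k = e \<otimes> t y1 \<otimes> e"
      have kH: "k \<in> Hs" using ty1 by (simp add: k_def)
      have "phi ((e \<otimes> x \<otimes> e) \<otimes> invH k) = \<one>\<^bsub>G\<^esub>"
        using cond unfolding eqs(2) nil k_def[symmetric] using rep[of "invH k"] kH phiM[OF exeH, of "invH k"] phiC[OF exeH] phiC[of "invH k"]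
        by (simp add: mon_eval_def)
      then have "(e \<otimes> x \<otimes> e) \<otimes> invH k = e" using phiI phie exeH kH unfolding inj_on_def by simp
      then have "(e \<otimes> x \<otimes> e) \<otimes> invH k \<otimes> k = k" using kH by simp
      then have exk: "e \<otimes> x \<otimes> e = k" using exeH kH by (simp add: assoc)
      have "Rr x (t y1)" using Rr_trans[OF x ty0 ty1 Rr_sym[OF ty0 x R] RR] .
      moreover have "Lr (t y1) x" using Lr_sym[OF x ty1 Lr_trans[OF x ty ty1 L LL]] .
      ultimately have "t y1 = x" using CI[OF ty1 x] exk k_def by simp
      have "LP (mult1 S None (Some (t y1))) (Bar y1 # []) None"
        using yy(3) by (intro loop_path.lp_bar loop_path.lp_nil) auto
      then show ?thesis unfolding eqs(3) nil using \<open>t y1 = x\<close> by simp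
    qed
  qed
  qed
qed

definition rho where "rho = {(u, v). \<exists>fs\<in>{Suc n}. trans_run EE n u v fs}"
definition KK where "KK = rel_image (word_problem G X sg) rho"

lemma kleene_nil: "[] \<in> kleene A" unfolding kleene_def by (rule CollectI, rule exI[of _ "[]"]) simp
lemma kleene_cons: "v \<in> A \<Longrightarrow> w \<in> kleene A \<Longrightarrow> v @ w \<in> kleene A"
proof -
  assume v: "v \<in> A" and w: "w \<in> kleene A"
  then obtain ws where "w = concat ws" "set ws \<subseteq> A" unfolding kleene_def by blast
  then show "v @ w \<in> kleene A" unfolding kleene_def using v by (intro CollectI exI[of _ "v # ws"]) simp
qed

lemma LP_app: "loop_path M mul Z gen a w1 b \<Longrightarrow> loop_path M mul Z gen b w2 c \<Longrightarrow> loop_path M mul Z gen a (w1 @ w2) c"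
  by (induction rule: loop_path.induct) (auto intro: loop_path.intros)

lemma mult1_Some_ne: "mult1 S a (Some b) \<noteq> None" by (cases a) auto

lemma sound0: assumes "(u, v) \<in> rho" "u \<in> word_problem G X sg" shows "LP None v None"
proof -
  have run: "trans_run EE n u v (Suc n)" using assms(1) unfolding rho_def by simp
  then obtain u1 v1 q u' v' where ed: "(n, u1, v1, q) \<in> EE" and run': "trans_run EE q u' v' (Suc n)"
    and eq: "u = u1 @ u'" "v = v1 @ v'"
    by (cases rule: trans_run.cases) auto
  have "(n, u1, v1, q) \<in> E0"
  proof -
    have "(n, u1, v1, q) \<notin> E1 \<union> E2 \<union> E3" unfolding E1_def E2_def E3_def using f_lt by fastforce
    then show ?thesis using ed unfolding EE_def by blast
  qed
  then obtain y0 where y0: "y0 \<in> Y" and eqs: "u1 = rep (e \<otimes> t y0 \<otimes> e)" "v1 = [Pos y0]" "q = f (y0, y0)"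
    unfolding E0_def by blast
  have ty0: "t y0 \<in> carrier S" using tY y0 by auto
  have ul: "u1 \<in> lists X" "u' \<in> lists X" using assms(2) eq unfolding word_problem_def by auto
  have "mon_eval G sg u = \<one>\<^bsub>G\<^esub>" using assms(2) unfolding word_problem_def by simp
  then have "phi (e \<otimes> t y0 \<otimes> e) \<otimes>\<^bsub>G\<^esub> mon_eval G sg u' = \<one>\<^bsub>G\<^esub>"
    using me_app[OF ul] rep[of "e \<otimes> t y0 \<otimes> e"] y0 eq eqs by simp
  then have "LP (Some (t y0)) v' None"
    using sound[OF run'] eqs(3) y0 ty0 Rr_refl[OF ty0] Lr_refl[OF ty0] by blast
  then have "LP (mult1 S None (Some (t y0))) v' None" by simp
  then have "LP None (Pos y0 # v') None" using y0 by (intro loop_path.lp_pos) auto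
  then show ?thesis using eq eqs by simp
qed

lemma complete: "LP a w b \<Longrightarrow> b = None \<Longrightarrow> (a = None \<longrightarrow> w \<in> kleene KK) \<and>
  (\<forall>x y0 y. a = Some x \<longrightarrow> y0 \<in> Y \<longrightarrow> y \<in> Y \<longrightarrow> Rr (t y0) x \<longrightarrow> Lr x (t y) \<longrightarrow>
     (\<exists>u w1 w2. u \<in> lists X \<and> w = w1 @ w2 \<and> trans_run EE (f (y0, y)) u w1 (Suc n) \<and>
        phi (e \<otimes> x \<otimes> e) \<otimes>\<^bsub>G\<^esub> mon_eval G sg u = \<one>\<^bsub>G\<^esub> \<and> w2 \<in> kleene KK))"
proof (induction rule: loop_path.induct)
  case (lp_nil a)
  then show ?case using kleene_nil by auto
next
  case (lp_pos a y w b)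
  note IH = lp_pos(4)[OF lp_pos(5)]
  have ty: "t y \<in> carrier S" using tY lp_pos(2) by auto
  show ?case
  proof (rule conjI)
    show "a = None \<longrightarrow> Pos y # w \<in> kleene KK"
    proof
      assume aN: "a = None"
      obtain u w1 w2 where uw: "u \<in> lists X" "w = w1 @ w2" "trans_run EE (f (y, y)) u w1 (Suc n)"
        "phi (e \<otimes> t y \<otimes> e) \<otimes>\<^bsub>G\<^esub> mon_eval G sg u = \<one>\<^bsub>G\<^esub>" "w2 \<in> kleene KK"
        using IH[THEN conjunct2, rule_format, of "t y" y y, OF _ lp_pos(2) lp_pos(2) Rr_refl[OF ty] Lr_refl[OF ty]] aN
        by auto
      define u0 where "u0 = rep (e \<otimes> t y \<otimes> e) @ u"
      have r: "rep (e \<otimes> t y \<otimes> e) \<in> lists X" "mon_eval G sg (rep (e \<otimes> t y \<otimes> e)) = phi (e \<otimes> t y \<otimes> e)"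
        using rep[of "e \<otimes> t y \<otimes> e"] lp_pos(2) by auto
      have "u0 \<in> word_problem G X sg" unfolding word_problem_def u0_def
        using r uw(1,4) me_app[OF r(1) uw(1)] by simp
      moreover have "(n, rep (e \<otimes> t y \<otimes> e), [Pos y], f (y, y)) \<in> EE"
        unfolding EE_def E0_def using lp_pos(2) by blast
      then have "trans_run EE n u0 ([Pos y] @ w1) (Suc n)" unfolding u0_def using uw(3) by (rule tr_step)
      then have "(u0, Pos y # w1) \<in> rho" unfolding rho_def by simp
      ultimately have "Pos y # w1 \<in> KK" unfolding KK_def rel_image_def by blast
      then show "Pos y # w \<in> kleene KK" using kleene_cons[OF _ uw(5)] uw(2) by fastforce
    qed
  next
    show "\<forall>x y0 y'. a = Some x \<longrightarrow> y0 \<in> Y \<longrightarrow> y' \<in> Y \<longrightarrow> Rr (t y0) x \<longrightarrow> Lr x (t y') \<longrightarrow>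
     (\<exists>u w1 w2. u \<in> lists X \<and> Pos y # w = w1 @ w2 \<and> trans_run EE (f (y0, y')) u w1 (Suc n) \<and>
        phi (e \<otimes> x \<otimes> e) \<otimes>\<^bsub>G\<^esub> mon_eval G sg u = \<one>\<^bsub>G\<^esub> \<and> w2 \<in> kleene KK)"
    proof (intro allI impI)
      fix x y0 yc assume aS: "a = Some x" and y0: "y0 \<in> Y" and yc: "yc \<in> Y" and R: "Rr (t y0) x" and L: "Lr x (t yc)"
      have x: "x \<in> carrier S" using lp_pos(1) aS by simp
      have ty0: "t y0 \<in> carrier S" and tyc: "t yc \<in> carrier S" using tY y0 yc by auto
      define x' where "x' = x \<otimes> t y"
      have x'C: "x' \<in> carrier S" using x ty by (simp add: x'_def)
      have R': "Rr (t y0) x'" unfolding x'_def using Rr_trans[OF ty0 x _ R Rr_mult[OF x ty]] x ty by simp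
      have L': "Lr x' (t y)" unfolding x'_def using Lr_mult[OF x ty] .
      obtain u' w1 w2 where uw: "u' \<in> lists X" "w = w1 @ w2" "trans_run EE (f (y0, y)) u' w1 (Suc n)"
        "phi (e \<otimes> x' \<otimes> e) \<otimes>\<^bsub>G\<^esub> mon_eval G sg u' = \<one>\<^bsub>G\<^esub>" "w2 \<in> kleene KK"
        using IH[THEN conjunct2, rule_format, of x' y0 y, OF _ y0 lp_pos(2) R' L'] aS unfolding x'_def by auto
      define c where "c = cc (t yc) (t y)"
      have cH: "c \<in> Hs" using tyc ty by (simp add: c_def)
      have exeH: "e \<otimes> x \<otimes> e \<in> Hs" using x by simp
      have inc: "e \<otimes> x' \<otimes> e = (e \<otimes> x \<otimes> e) \<otimes> c" unfolding x'_def c_def using INC[OF x tyc ty L] .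
      have ed: "(f (y0, yc), rep c, [Pos y], f (y0, y)) \<in> EE"
        unfolding EE_def E1_def c_def using y0 yc lp_pos(2) by blast
      have run: "trans_run EE (f (y0, yc)) (rep c @ u') ([Pos y] @ w1) (Suc n)"
        using ed uw(3) by (rule tr_step)
      have rc: "rep c \<in> lists X" "mon_eval G sg (rep c) = phi c" using rep[OF cH] by auto
      have "phi (e \<otimes> x \<otimes> e) \<otimes>\<^bsub>G\<^esub> mon_eval G sg (rep c @ u') = \<one>\<^bsub>G\<^esub>"
        using uw(4) unfolding inc me_app[OF rc(1) uw(1)] rc(2)
        using phiM[OF exeH cH] phiC[OF exeH] phiC[OF cH] me_C[OF uw(1)] by (simp add: G.m_assoc)
      then show "\<exists>u w1 w2. u \<in> lists X \<and> Pos y # w = w1 @ w2 \<and> trans_run EE (f (y0, yc)) u w1 (Suc n) \<and>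
        phi (e \<otimes> x \<otimes> e) \<otimes>\<^bsub>G\<^esub> mon_eval G sg u = \<one>\<^bsub>G\<^esub> \<and> w2 \<in> kleene KK"
        using run rc(1) uw(1,2,5) by (intro exI[of _ "rep c @ u'"] exI[of _ "[Pos y] @ w1"] exI[of _ w2]) auto
    qed
  qed
next
  case (lp_bar a y w b)
  note IH = lp_bar(4)[OF lp_bar(5)]
  have ty: "t y \<in> carrier S" using tY lp_bar(2) by auto
  show ?case
  proof (rule conjI)
    show "mult1 S a (Some (t y)) = None \<longrightarrow> Bar y # w \<in> kleene KK" using mult1_Some_ne[of a "t y"] by blast
  next
    show "\<forall>x y0 y'. mult1 S a (Some (t y)) = Some x \<longrightarrow> y0 \<in> Y \<longrightarrow> y' \<in> Y \<longrightarrow> Rr (t y0) x \<longrightarrow> Lr x (t y') \<longrightarrow>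
     (\<exists>u w1 w2. u \<in> lists X \<and> Bar y # w = w1 @ w2 \<and> trans_run EE (f (y0, y')) u w1 (Suc n) \<and>
        phi (e \<otimes> x \<otimes> e) \<otimes>\<^bsub>G\<^esub> mon_eval G sg u = \<one>\<^bsub>G\<^esub> \<and> w2 \<in> kleene KK)"
    proof (intro allI impI)
      fix x y0 yc assume aS: "mult1 S a (Some (t y)) = Some x" and y0: "y0 \<in> Y" and yc: "yc \<in> Y"
        and R: "Rr (t y0) x" and L: "Lr x (t yc)"
      have ty0: "t y0 \<in> carrier S" and tyc: "t yc \<in> carrier S" using tY y0 yc by auto
      show "\<exists>u w1 w2. u \<in> lists X \<and> Bar y # w = w1 @ w2 \<and> trans_run EE (f (y0, yc)) u w1 (Suc n) \<and>
        phi (e \<otimes> x \<otimes> e) \<otimes>\<^bsub>G\<^esub> mon_eval G sg u = \<one>\<^bsub>G\<^esub> \<and> w2 \<in> kleene KK"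
      proof (cases a)
        case None
        then have xe: "x = t y" using aS by simp
        have wK: "w \<in> kleene KK" using IH None by simp
        define k where "k = e \<otimes> t y \<otimes> e"
        have kH: "k \<in> Hs" using ty by (simp add: k_def)
        have ed: "(f (y0, yc), rep (invH k), [Bar y], Suc n) \<in> EE"
          unfolding EE_def E3_def k_def using y0 yc lp_bar(2) R xe Lr_sym[OF ty tyc] L by blast
        have run: "trans_run EE (f (y0, yc)) (rep (invH k) @ []) ([Bar y] @ []) (Suc n)"
          using ed trans_run.tr_nil by (rule tr_step)
        have rk: "rep (invH k) \<in> lists X" "mon_eval G sg (rep (invH k)) = phi (invH k)" using rep[of "invH k"] kH by auto
        have "phi (e \<otimes> x \<otimes> e) \<otimes>\<^bsub>G\<^esub> mon_eval G sg (rep (invH k)) = \<one>\<^bsub>G\<^esub>"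
          unfolding rk(2) xe k_def[symmetric] using phiM[OF kH, of "invH k"] kH phie by simp
        then show ?thesis using run rk(1) wK
          by (intro exI[of _ "rep (invH k)"] exI[of _ "[Bar y]"] exI[of _ w]) auto
      next
        case (Some x2)
        have x2: "x2 \<in> carrier S" using lp_bar(1) Some by simp
        have xe: "x = x2 \<otimes> t y" using aS Some by simp
        obtain y' where y': "y' \<in> Y" "Lr x2 (t y')" using gen[OF x2] by blast
        have ty': "t y' \<in> carrier S" using tY y' by auto
        have xC: "x \<in> carrier S" using xe x2 ty by simp
        have R2: "Rr (t y0) x2" using Rr_trans[OF ty0 xC x2 R Rr_sym[OF x2 xC]] Rr_mult[OF x2 ty] xe by simp
        obtain u' w1 w2 where uw: "u' \<in> lists X" "w = w1 @ w2" "trans_run EE (f (y0, y')) u' w1 (Suc n)"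
          "phi (e \<otimes> x2 \<otimes> e) \<otimes>\<^bsub>G\<^esub> mon_eval G sg u' = \<one>\<^bsub>G\<^esub>" "w2 \<in> kleene KK"
          using IH Some y0 y' R2 by blast
        define c where "c = cc (t y') (t y)"
        have cH: "c \<in> Hs" using ty' ty by (simp add: c_def)
        have ex2H: "e \<otimes> x2 \<otimes> e \<in> Hs" using x2 by simp
        have inc: "e \<otimes> x \<otimes> e = (e \<otimes> x2 \<otimes> e) \<otimes> c" unfolding xe c_def using INC[OF x2 ty' ty y'(2)] .
        have LL: "Lr (t yc) (t y)" using Lr_trans[OF tyc xC ty Lr_sym[OF xC tyc L]] Lr_mult[OF x2 ty] xe by simp
        have ed: "(f (y0, yc), rep (invH c), [Bar y], f (y0, y')) \<in> EE"
          unfolding EE_def E2_def c_def using y0 yc y'(1) lp_bar(2) LL by blast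
        have run: "trans_run EE (f (y0, yc)) (rep (invH c) @ u') ([Bar y] @ w1) (Suc n)"
          using ed uw(3) by (rule tr_step)
        have rc: "rep (invH c) \<in> lists X" "mon_eval G sg (rep (invH c)) = phi (invH c)" using rep[of "invH c"] cH by auto
        have "(e \<otimes> x \<otimes> e) \<otimes> invH c = (e \<otimes> x2 \<otimes> e) \<otimes> (c \<otimes> invH c)" unfolding inc using ex2H cH by (simp add: assoc)
        then have eq2: "(e \<otimes> x \<otimes> e) \<otimes> invH c = e \<otimes> x2 \<otimes> e" using cH ex2H by simp
        have exH: "e \<otimes> x \<otimes> e \<in> Hs" using xC by simp
        have "phi (e \<otimes> x \<otimes> e) \<otimes>\<^bsub>G\<^esub> mon_eval G sg (rep (invH c) @ u') = \<one>\<^bsub>G\<^esub>"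
          unfolding me_app[OF rc(1) uw(1)] rc(2)
          using uw(4) phiM[OF exH, of "invH c"] cH phiC[OF exH] phiC[of "invH c"] me_C[OF uw(1)] eq2
          by (simp add: G.m_assoc[symmetric])
        then show ?thesis using run rc(1) uw(1,2,5)
          by (intro exI[of _ "rep (invH c) @ u'"] exI[of _ "[Bar y] @ w1"] exI[of _ w2]) auto
      qed
    qed
  qed
qed

lemma main_eq: "L_tau S Y t = kleene KK"
proof
  show "L_tau S Y t \<subseteq> kleene KK"
    unfolding L_tau_def loop_problem_def using complete by blast
next
  show "kleene KK \<subseteq> L_tau S Y t"
  proof
    fix w assume "w \<in> kleene KK"
    then obtain ws where w: "w = concat ws" "set ws \<subseteq> KK" unfolding kleene_def by blast
    have "LP None (concat ws) None" using w(2)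
    proof (induction ws)
      case Nil then show ?case by (simp add: loop_path.lp_nil)
    next
      case (Cons v ws)
      then have "v \<in> KK" by simp
      then have "LP None v None" unfolding KK_def rel_image_def using sound0 by blast
      then show ?case using Cons LP_app by fastforce
    qed
    then show "w \<in> L_tau S Y t" unfolding L_tau_def loop_problem_def w(1) by simp
  qed
qed

lemma rat: "rational_transduction X (hat_alph Y) rho"
proof -
  have P: "\<forall>(p, u, v, q)\<in>EE. p \<in> {i. i \<le> Suc n} \<and> q \<in> {i. i \<le> Suc n} \<and> u \<in> lists X \<and> v \<in> lists (hat_alph Y)"
    using EE_props by blast
  show ?thesis unfolding rational_transduction_def
    apply (rule exI[of _ "{i. i \<le> Suc n}"])
    apply (rule exI[of _ EE])
    apply (rule exI[of _ n])
    apply (rule exI[of _ "{Suc n}"])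
    using P finite_EE by (auto simp: rho_def)
qed

end
lemma (in cs) fold_C: "a \<in> carrier S \<Longrightarrow> set w \<subseteq> Z \<Longrightarrow> (\<forall>y\<in>Z. t y \<in> carrier S) \<Longrightarrow>
   foldl (\<lambda>x y. x \<otimes> t y) a w \<in> carrier S"
  by (induction w arbitrary: a) auto

lemma (in cs) gen_lemma: assumes "sg_gen_choice S Y t" "x \<in> carrier S" shows "\<exists>y\<in>Y. Lr x (t y)"
proof -
  have tY: "\<forall>y\<in>Y. t y \<in> carrier S" using assms(1) unfolding sg_gen_choice_def by blast
  obtain w where w: "w \<in> lists Y" "w \<noteq> []" "sg_eval S t w = x" using assms unfolding sg_gen_choice_def by blast
  show ?thesis
  proof (cases "tl w = []")
    case True
    then have "x = t (hd w)" using w unfolding sg_eval_def by simp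
    moreover have "hd w \<in> Y" using w by (cases w) auto
    ultimately show ?thesis using Lr_refl tY by blast
  next
    case False
    have hw: "hd w \<in> Y" using w by (cases w) auto
    have sub: "set (tl w) \<subseteq> Y" using w by (cases w) auto
    obtain zs z where zz: "tl w = zs @ [z]" using False by (metis append_butlast_last_id)
    have z: "z \<in> Y" using sub zz by auto
    have "x = foldl (\<lambda>x y. x \<otimes> t y) (t (hd w)) zs \<otimes> t z" using w zz unfolding sg_eval_def by simp
    moreover have "foldl (\<lambda>x y. x \<otimes> t y) (t (hd w)) zs \<in> carrier S"
      using fold_C[of "t (hd w)" zs Y] hw sub zz tY by auto
    ultimately show ?thesis using Lr_mult z tY by blast
  qed
qed

lemma (in cs) maximal_H: "maximal_subgroup S Hs"
  unfolding maximal_subgroup_def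
proof (intro conjI allI impI)
  show "subgroup_of_sg S Hs" unfolding subgroup_of_sg_def using group_H by auto
next
  fix K assume A: "subgroup_of_sg S K \<and> Hs \<subseteq> K"
  then obtain e2 where KC: "K \<subseteq> carrier S" and gK: "group (sub_struct S K e2)" unfolding subgroup_of_sg_def by blast
  have eK: "e \<in> K" using A by auto
  have "e \<otimes> e = e" by simp
  then have "e = e2" using group.l_cancel_one[OF gK, of e e] eK by (simp add: sub_struct_def)
  have "K \<subseteq> Hs"
  proof
    fix k assume k: "k \<in> K"
    have "e2 \<otimes> k = k" "k \<otimes> e2 = k"
      using monoid.l_one[OF group.is_monoid[OF gK], of k] monoid.r_one[OF group.is_monoid[OF gK], of k] k
      by (auto simp: sub_struct_def)
    then have "k = e \<otimes> k \<otimes> e" using \<open>e = e2\<close> by simp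
    then show "k \<in> Hs" using Hs_I[of k] k KC by auto
  qed
  then show "K = Hs" using A by blast
qed

theorem theorem5p5:
  fixes S :: "('s, 'e) monoid_scheme" and G :: "('g, 'b) monoid_scheme"
    and Y :: "'y set" and t :: "'y \<Rightarrow> 's"
    and X :: "'x set" and s :: "'x \<Rightarrow> 'g"
  assumes "completely_simple S"
    and "finitely_generated_sg S"
    and "group G"
    and "\<forall>H. maximal_subgroup S H \<longrightarrow>
           (\<exists>e. group (sub_struct S H e) \<and> sub_struct S H e \<cong> G)"
    and "sg_gen_choice S Y t"
    and "mon_gen_choice G X s"
  shows "\<exists>\<rho>. rational_transduction X (hat_alph Y) \<rho> \<and>
           L_tau S Y t = kleene (rel_image (word_problem G X s) \<rho>)"
proof -
  have sgS: "is_semigroup S" and ne: "carrier S \<noteq> {}" and ideals: "\<And>I. sg_ideal S I \<Longrightarrow> I = carrier S"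
    using assms(1) unfolding completely_simple_def by auto
  obtain e where pe: "primitive_idempotent S e" using assms(1) unfolding completely_simple_def by auto
  have cl: "\<And>x y. x \<in> carrier S \<Longrightarrow> y \<in> carrier S \<Longrightarrow> x \<otimes>\<^bsub>S\<^esub> y \<in> carrier S"
    and as: "\<And>x y z. x \<in> carrier S \<Longrightarrow> y \<in> carrier S \<Longrightarrow> z \<in> carrier S \<Longrightarrow>
       (x \<otimes>\<^bsub>S\<^esub> y) \<otimes>\<^bsub>S\<^esub> z = x \<otimes>\<^bsub>S\<^esub> (y \<otimes>\<^bsub>S\<^esub> z)"
    using sgS unfolding is_semigroup_def by auto
  have simple: "\<exists>x\<in>carrier S. \<exists>y\<in>carrier S. a = x \<otimes>\<^bsub>S\<^esub> b \<otimes>\<^bsub>S\<^esub> y"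
    if a: "a \<in> carrier S" and b: "b \<in> carrier S" for a b
  proof -
    define I where "I = {x \<otimes>\<^bsub>S\<^esub> b \<otimes>\<^bsub>S\<^esub> y | x y. x \<in> carrier S \<and> y \<in> carrier S}"
    have "sg_ideal S I"
      unfolding sg_ideal_def
    proof (intro conjI ballI)
      show "I \<noteq> {}" using ne b unfolding I_def by blast
      show "I \<subseteq> carrier S" using cl b unfolding I_def by blast
    next
      fix z i assume z: "z \<in> carrier S" and i: "i \<in> I"
      then obtain x y where xy: "x \<in> carrier S" "y \<in> carrier S" "i = x \<otimes>\<^bsub>S\<^esub> b \<otimes>\<^bsub>S\<^esub> y" unfolding I_def by blast
      have "z \<otimes>\<^bsub>S\<^esub> i = (z \<otimes>\<^bsub>S\<^esub> x) \<otimes>\<^bsub>S\<^esub> b \<otimes>\<^bsub>S\<^esub> y" using xy z b cl as by simp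
      then show "z \<otimes>\<^bsub>S\<^esub> i \<in> I" using xy z cl unfolding I_def by blast
      have "i \<otimes>\<^bsub>S\<^esub> z = x \<otimes>\<^bsub>S\<^esub> b \<otimes>\<^bsub>S\<^esub> (y \<otimes>\<^bsub>S\<^esub> z)" using xy z b cl as by simp
      then show "i \<otimes>\<^bsub>S\<^esub> z \<in> I" using xy z cl unfolding I_def by blast
    qed
    then have "I = carrier S" by (rule ideals)
    then show ?thesis using a unfolding I_def by blast
  qed
  interpret cs S e
    using cl as simple pe unfolding primitive_idempotent_def by unfold_locales blast+
  obtain e' where "group (sub_struct S Hs e')" and iso: "sub_struct S Hs e' \<cong> G"
    using assms(4) maximal_H by blast
  then obtain phi where phi: "phi \<in> iso (sub_struct S Hs e') G" unfolding is_iso_def by blast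
  have phiC: "\<And>h. h \<in> Hs \<Longrightarrow> phi h \<in> carrier G"
    and phiM: "\<And>h1 h2. h1 \<in> Hs \<Longrightarrow> h2 \<in> Hs \<Longrightarrow> phi (h1 \<otimes>\<^bsub>S\<^esub> h2) = phi h1 \<otimes>\<^bsub>G\<^esub> phi h2"
    and phiI: "inj_on phi Hs"
    using phi unfolding iso_def hom_def bij_betw_def by (auto simp: sub_struct_def)
  have finY: "finite Y" and tY: "\<And>y. y \<in> Y \<Longrightarrow> t y \<in> carrier S" using assms(5) unfolding sg_gen_choice_def by auto
  obtain f n where fn: "f ` (Y \<times> Y) = {i::nat. i < n}" "inj_on f (Y \<times> Y)"
    using finite_imp_inj_to_nat_seg[of "Y \<times> Y"] finY by blast
  interpret M: mainloc S e G X s Y t phi f n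
    by (intro mainloc.intro cs_axioms mainloc_axioms.intro)
      (use assms(3,6) tY finY gen_lemma[OF assms(5)] phiC phiM phiI fn in auto)
  show ?thesis using M.rat M.main_eq unfolding M.KK_def by blast
qed

end
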